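(* Let $X$, $D_0$, $D_\infty$ be as constructed in the context, from data $\sigma_0$, $L$ with $c(L)=-k$, points $r_1,\dots,r_s$ and integers $k^i_j\ge2$, with resulting integers $l^i_j\ge 2$. The following are equivalent: (1) $D_\infty$ is the support of a divisor with positive normal bundle; (2) the intersection matrix of the components of $D_0$ is negative definite; (3) $\displaystyle\sum_{i=1}^s\frac{1}{[k^i_1,k^i_2,\dots,k^i_{n_i}]}<k$; (4) $\displaystyle\sum_{i=1}^s\frac{1}{[l^i_1,l^i_2,\dots,l^i_{m_i}]}>s-k$.
   Context: Let $\sigma_0$ be a compact Riemann surface, $L$ a holomorphic line bundle on it of degree $-k$, $k\ge1$, and $\bar L$ the $\mathbb P^1$-bundle obtained by gluing $L$ and its dual $L^{-1}$ via $a\mapsto 1/a$ off the zero sections; $\sigma_0$ is the zero section of $L$ (self-intersection $-k$) and $\sigma_\infty$ the zero section of $L^{-1}$ (self-intersection $k$). For each of given distinct points $r_1,\dots,r_s\in\sigma_0$ and given integers $k^i_1,\dots,k^i_{n_i}\ge2$, perform successive blow-ups starting at the point $r_i^\infty=\sigma_\infty\cap\bar L_{r_i}$ (and then at points of the exceptional curves in the chain between $\sigma_0$ and $\sigma_\infty$) so as to replace the chain $\sigma_0,\bar L_{r_i},\sigma_\infty$ by a chain $\sigma_0,\sigma^i_1,\dots,\sigma^i_{n_i},\tilde\sigma,\tau^i_{m_i},\dots,\tau^i_1,\sigma_\infty$ with self-intersections $\sigma^i_j\cdot\sigma^i_j=-k^i_j$, $\tilde\sigma\cdot\tilde\sigma=-1$,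 $\tau^i_j\cdot\tau^i_j=-l^i_j<-1$ ($\sigma^i_1$ being the strict transform of the fiber $\bar L_{r_i}$). Doing this at every $r_i$ yields a smooth projective surface $X$, in which $\sigma_\infty\cdot\sigma_\infty=k-s$. Put $D_\infty=\sigma_\infty+\sum_{i,j}\tau^i_j$ and $D_0=\sigma_0+\sum_{i,j}\sigma^i_j$. A divisor $Y=\sum_{i=1}^lY_i$ on a surface is the support of a divisor with positive normal bundle if there are positive integers $a_i$ with $(\sum a_iY_i)\cdot Y_j>0$ for all $j$. Continued fractions: $[a_1,\dots,a_n]=a_1-\cfrac{1}{a_2-\cfrac{1}{\ddots-\cfrac1{a_n}}}$. *)

theory Defs
  imports Complex_Main
begin

fun cfrac :: "int list \<Rightarrow> real" where
  "cfrac [] = 0"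
| "cfrac [a] = of_int a"
| "cfrac (a # b # rest) = of_int a - 1 / cfrac (b # rest)"

text \<open>Self-intersection numbers of the chain of curves lying in the fibre over r_i,
  listed from the strict transform of the fibre (adjacent to sigma_0) towards sigma_infinity.
  Blowing up the node between the curves at positions i and i+1 decreases both
  self-intersections by one and inserts a (-1)-curve between them.\<close>
definition blowup_node :: "int list \<Rightarrow> nat \<Rightarrow> int list" where
  "blowup_node xs i = take i xs @ [xs ! i - 1, -1, xs ! (i + 1) - 1] @ drop (i + 2) xs"

text \<open>Chains obtained as in the construction: first blow up r_i^infinity = sigma_infinity \<inter> fibre
  (fibre 0 becomes -1, new exceptional curve -1, and sigma_infinity drops by one), then
  blow up further points of exceptional curves of the chain, which (to keep a chain between
  sigma_0 and sigma_infinity and not change sigma_0 and sigma_infinity further) are nodes of the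
  chain strictly between sigma_0 and sigma_infinity.\<close>
inductive fibre_chain :: "int list \<Rightarrow> bool" where
  first: "fibre_chain [-1, -1]"
| node: "fibre_chain xs \<Longrightarrow> i + 1 < length xs \<Longrightarrow> fibre_chain (blowup_node xs i)"

text \<open>Components of a star-shaped configuration: None is the central curve, Some (i, j)
  is the (j+1)-st curve of the i-th arm, counted from the centre.\<close>
definition star_comps :: "nat \<Rightarrow> (nat \<Rightarrow> nat) \<Rightarrow> (nat \<times> nat) option set" where
  "star_comps s len = insert None {Some (i, j) | i j. i < s \<and> j < len i}"

fun star_form :: "int \<Rightarrow> (nat \<Rightarrow> nat \<Rightarrow> int) \<Rightarrow> (nat \<times> nat) option \<Rightarrow> (nat \<times> nat) option \<Rightarrow> int" where
  "star_form c a None None = c"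
| "star_form c a None (Some (i, j)) = (if j = 0 then 1 else 0)"
| "star_form c a (Some (i, j)) None = (if j = 0 then 1 else 0)"
| "star_form c a (Some (i, j)) (Some (i', j')) =
     (if i = i' then (if j = j' then a i j else if j = j' + 1 \<or> j' = j + 1 then 1 else 0) else 0)"

definition neg_definite :: "('c \<Rightarrow> 'c \<Rightarrow> int) \<Rightarrow> 'c set \<Rightarrow> bool" where
  "neg_definite Q S \<longleftrightarrow>
     (\<forall>x :: 'c \<Rightarrow> real. (\<exists>u\<in>S. x u \<noteq> 0) \<longrightarrow>
        (\<Sum>u\<in>S. \<Sum>v\<in>S. x u * of_int (Q u v) * x v) < 0)"

definition pos_normal_support :: "('c \<Rightarrow> 'c \<Rightarrow> int) \<Rightarrow> 'c set \<Rightarrow> bool" where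
  "pos_normal_support Q S \<longleftrightarrow>
     (\<exists>a :: 'c \<Rightarrow> int. (\<forall>u\<in>S. a u > 0) \<and> (\<forall>v\<in>S. (\<Sum>u\<in>S. a u * Q u v) > 0))"

end

theory Submission
  imports Defs
begin


type_synonym m2 = "int \<times> int \<times> int \<times> int"

fun mm :: "m2 \<Rightarrow> m2 \<Rightarrow> m2" where
  "mm (a,b,c,d) (e,f,g,h) = (a*e+b*g, a*f+b*h, c*e+d*g, c*f+d*h)"

definition MX :: "int \<Rightarrow> m2" where "MX x = (-x, -1, 1, 0)"

fun pm :: "int list \<Rightarrow> m2" where
  "pm [] = (1,0,0,1)"
| "pm (x#xs) = mm (MX x) (pm xs)"

fun det2 :: "m2 \<Rightarrow> int" where "det2 (a,b,c,d) = a*d - b*c"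

lemma mm_assoc: "mm (mm A B) C = mm A (mm B C)"
  by (cases A; cases B; cases C) (simp add: algebra_simps)

lemma mm_idr: "mm A (1,0,0,1) = A" by (cases A) simp
lemma mm_idl: "mm (1,0,0,1) A = A" by (cases A) simp

lemma det_mm: "det2 (mm A B) = det2 A * det2 B"
  by (cases A; cases B) (simp add: algebra_simps)

lemma det_pm: "det2 (pm xs) = 1"
  by (induction xs) (simp_all add: det_mm MX_def)

lemma pm_append: "pm (xs @ ys) = mm (pm xs) (pm ys)"
  by (induction xs) (simp_all add: mm_assoc mm_idl)

lemma split_two: "i + 1 < length xs \<Longrightarrow> xs = take i xs @ [xs!i, xs!(i+1)] @ drop (i+2) xs"
proof -
  assume h: "i + 1 < length xs"
  have "xs = take i xs @ drop i xs" by simp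
  moreover have "drop i xs = xs!i # drop (Suc i) xs" using h by (simp add: Cons_nth_drop_Suc)
  moreover have "drop (Suc i) xs = xs!(i+1) # drop (i+2) xs" using h
    by (metis Cons_nth_drop_Suc Suc_eq_plus1 add_2_eq_Suc')
  ultimately show ?thesis by (metis append_Cons append_Nil)
qed

lemma pm_blowup: "i + 1 < length xs \<Longrightarrow> pm (blowup_node xs i) = pm xs"
proof -
  assume h: "i + 1 < length xs"
  have key: "mm (MX (a-1)) (mm (MX (-1)) (MX (b-1))) = mm (MX a) (MX b)" for a b
    by (simp add: MX_def algebra_simps)
  have k2: "pm [a-1, -1, b-1] = pm [a,b]" for a b
    using key[of a b] by (simp add: mm_idr)
  have "pm xs = pm (take i xs @ [xs!i, xs!(i+1)] @ drop (i+2) xs)"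
    using split_two[OF h] by simp
  also have "\<dots> = pm (blowup_node xs i)"
    unfolding blowup_node_def pm_append k2 ..
  finally show ?thesis by simp
qed

lemma chain_pm: "fibre_chain xs \<Longrightarrow> pm xs = (0,-1,1,-1)"
  by (induction rule: fibre_chain.induct) (simp_all add: pm_blowup MX_def)

lemma pm_rev: "pm (rev xs) = (case pm xs of (a,b,d,e) \<Rightarrow> (a,-d,-b,e))"
proof (induction xs)
  case Nil then show ?case by simp
next
  case (Cons x xs)
  obtain a b d e where h: "pm xs = (a,b,d,e)" by (cases "pm xs") auto
  show ?case using Cons h by (simp add: pm_append mm_idr MX_def algebra_simps)
qed

lemma pc_props: "cs \<noteq> [] \<Longrightarrow> \<forall>c\<in>set cs. c \<ge> 2 \<Longrightarrow>
   (case pm (map uminus cs) of (a,b,d,e) \<Rightarrow> a > d \<and> d > 0 \<and> cfrac cs = a / d)"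
proof (induction cs)
  case Nil then show ?case by simp
next
  case (Cons c cs)
  show ?case
  proof (cases "cs = []")
    case True then show ?thesis using Cons by (simp add: MX_def)
  next
    case False
    then obtain c' cs' where cs: "cs = c' # cs'" by (cases cs) auto
    obtain a b d e where h: "pm (map uminus cs) = (a,b,d,e)" by (cases "pm (map uminus cs)") auto
    from Cons.IH[OF False] Cons.prems h have ih: "a > d" "d > 0" "cfrac cs = a / d" by auto
    have c2: "c \<ge> 2" using Cons.prems by simp
    have "(c-1)*a \<ge> a" using c2 ih by (simp add: algebra_simps)
    then have "c*a - a \<ge> a" by (simp add: algebra_simps)
    then have g: "c*a - d > a" using ih by linarith
    have "cfrac (c # cs) = c - 1 / (a/d)" using cs ih by simp
    also have "\<dots> = (c*a - d) / a" using ih by (simp add: field_simps)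
    finally show ?thesis using h g ih by (simp add: MX_def)
  qed
qed

lemma chain_cf:
  assumes "ks \<noteq> []" "ls \<noteq> []" "\<forall>c\<in>set ks. c \<ge> 2" "\<forall>c\<in>set ls. c \<ge> 2"
    "fibre_chain (map uminus ks @ [-1] @ rev (map uminus ls))"
  shows "1 / cfrac ks + 1 / cfrac ls = 1"
proof -
  obtain p x q y where pk: "pm (map uminus ks) = (p,x,q,y)" by (cases "pm (map uminus ks)") auto
  obtain r b t e where pl: "pm (map uminus ls) = (r,b,t,e)" by (cases "pm (map uminus ls)") auto
  have P1: "p > q" "q > 0" "cfrac ks = p / q" using pc_props[OF assms(1,3)] pk by auto
  have P2: "r > t" "t > 0" "cfrac ls = r / t" using pc_props[OF assms(2,4)] pl by auto
  have dt: "p*y - x*q = 1" using det_pm[of "map uminus ks"] pk by simp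
  have "pm (map uminus ks @ [-1] @ rev (map uminus ls)) = (0,-1,1,-1)"
    using chain_pm[OF assms(5)] .
  then have E: "mm (p,x,q,y) (mm (1,-1,1,0) (r,-t,-b,e)) = (0,-1,1,-1)"
    using pk pl by (simp add: pm_append pm_rev mm_idr MX_def)
  then have e1: "p*(r+b) + x*r = 0" and e2: "p*(-t-e) + x*(-t) = -1"
    and e3: "q*(r+b) + y*r = 1" and e4: "q*(-t-e) + y*(-t) = -1"
    by (simp_all add: algebra_simps)
  have rp: "r = p" using e1 e3 dt by algebra
  have tq: "t = p - q" using e2 e4 dt by algebra
  have lq: "cfrac ls = p / (p - q)" using P2 rp tq by simp
  have pq: "real_of_int p - real_of_int q > 0" "real_of_int p > 0" using P1 by simp_all
  have "1 / cfrac ks + 1 / cfrac ls = q / p + (p - q) / p" using P1(3) lq by simp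
  also have "\<dots> = 1" using pq by (simp add: field_simps)
  finally show ?thesis .
qed



definition cf :: "(nat \<Rightarrow> int) \<Rightarrow> nat \<Rightarrow> real" where
  "cf a n = cfrac (map a [0..<n])"

lemma map_upt_Suc0: "map a [0..<Suc n] = a 0 # map (\<lambda>j. a (Suc j)) [0..<n]"
  by (induction n) auto

lemma cf_one: "cf a (Suc 0) = a 0" by (simp add: cf_def)

lemma cf_Suc: "n \<ge> 1 \<Longrightarrow> cf a (Suc n) = a 0 - 1 / cf (\<lambda>j. a (Suc j)) n"
  unfolding cf_def map_upt_Suc0
  by (cases n) (simp_all add: map_upt_Suc0 del: upt_Suc)

lemma cf_gt1: "n \<ge> 1 \<Longrightarrow> \<forall>j<n. a j \<ge> 2 \<Longrightarrow> cf a n > 1"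
proof -
  assume h: "n \<ge> 1" "\<forall>j<n. a j \<ge> 2"
  have ne: "map a [0..<n] \<noteq> []" using h by simp
  have all: "\<forall>c\<in>set (map a [0..<n]). c \<ge> 2" using h by auto
  obtain p b d e where pk: "pm (map uminus (map a [0..<n])) = (p,b,d,e)"
    by (cases "pm (map uminus (map a [0..<n]))") auto
  from pc_props[OF ne all] pk have "p > d" "d > 0" "cfrac (map a [0..<n]) = p / d" by auto
  then show ?thesis unfolding cf_def by simp
qed

definition F :: "(nat \<Rightarrow> real) \<Rightarrow> nat \<Rightarrow> real \<Rightarrow> (nat \<Rightarrow> real) \<Rightarrow> real" where
  "F a n u y = (\<Sum>j<n. y j * ((if j = 0 then u else y (j-1)) + a j * y j + (if j+1 < n then y (j+1) else 0)))"

lemma F_one: "F a (Suc 0) u y = y 0 * u + a 0 * y 0 * y 0"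
  by (simp add: F_def algebra_simps)

lemma F_Suc: "n \<ge> 1 \<Longrightarrow> F a (Suc n) u y
   = y 0 * u + a 0 * y 0 * y 0 + y 0 * y 1 + F (\<lambda>j. a (Suc j)) n (y 0) (\<lambda>j. y (Suc j))"
proof -
  assume n: "n \<ge> 1"
  have "F a (Suc n) u y = y 0 * (u + a 0 * y 0 + y 1) +
     (\<Sum>j<n. y (Suc j) * ((if Suc j = 0 then u else y (Suc j - 1)) + a (Suc j) * y (Suc j)
         + (if Suc j + 1 < Suc n then y (Suc j + 1) else 0)))"
    unfolding F_def sum.lessThan_Suc_shift using n by simp
  also have "(\<Sum>j<n. y (Suc j) * ((if Suc j = 0 then u else y (Suc j - 1)) + a (Suc j) * y (Suc j)
         + (if Suc j + 1 < Suc n then y (Suc j + 1) else 0)))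
      = F (\<lambda>j. a (Suc j)) n (y 0) (\<lambda>j. y (Suc j))"
    unfolding F_def by (rule sum.cong) (auto simp: not0_implies_Suc)
  finally show ?thesis by (simp add: algebra_simps)
qed

lemma quad_le: "(c::real) > 0 \<Longrightarrow> 2*u*v - c*v^2 \<le> u^2/c"
proof -
  assume c: "c > 0"
  have "u^2/c - (2*u*v - c*v^2) = (u - c*v)^2/c" using c
    by (simp add: field_simps power2_eq_square)
  also have "\<dots> \<ge> 0" using c by simp
  finally show ?thesis by simp
qed

abbreviation nk :: "(nat \<Rightarrow> int) \<Rightarrow> nat \<Rightarrow> real" where "nk kf \<equiv> (\<lambda>j. - of_int (kf j))"

lemma F_bound: "n \<ge> 1 \<Longrightarrow> \<forall>j<n. kf j \<ge> 2 \<Longrightarrow> F (nk kf) n u y + u * y 0 \<le> u^2 / cf kf n"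
proof (induction n arbitrary: kf u y)
  case 0 then show ?case by simp
next
  case (Suc n)
  show ?case
  proof (cases "n = 0")
    case True
    have k: "real_of_int (kf 0) > 0" using Suc.prems by auto
    have "F (nk kf) (Suc n) u y + u * y 0 = 2*u*y 0 - kf 0 * (y 0)^2"
      using True by (simp add: F_one power2_eq_square algebra_simps)
    also have "\<dots> \<le> u^2 / kf 0" by (rule quad_le[OF k])
    finally show ?thesis using True by (simp add: cf_one)
  next
    case False
    then have n: "n \<ge> 1" by simp
    have ks: "\<forall>j<n. kf (Suc j) \<ge> 2" using Suc.prems by auto
    have ih: "F (nk (\<lambda>j. kf (Suc j))) n (y 0) (\<lambda>j. y (Suc j)) + y 0 * y 1
         \<le> (y 0)^2 / cf (\<lambda>j. kf (Suc j)) n"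
      using Suc.IH[OF n ks, of "y 0" "\<lambda>j. y (Suc j)"] by simp
    have c1: "cf (\<lambda>j. kf (Suc j)) n > 1" using cf_gt1[OF n ks] .
    have c: "cf kf (Suc n) > 1" using cf_gt1[of "Suc n" kf] Suc.prems by simp
    have eq: "cf kf (Suc n) = kf 0 - 1 / cf (\<lambda>j. kf (Suc j)) n" using cf_Suc[OF n] .
    have "F (nk kf) (Suc n) u y + u * y 0 = 2*u*y 0 - kf 0 * (y 0)^2
        + (F (nk (\<lambda>j. kf (Suc j))) n (y 0) (\<lambda>j. y (Suc j)) + y 0 * y 1)"
      using F_Suc[OF n, of "nk kf" u y] by (simp add: power2_eq_square algebra_simps)
    also have "\<dots> \<le> 2*u*y 0 - kf 0 * (y 0)^2 + (y 0)^2 / cf (\<lambda>j. kf (Suc j)) n"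
      using ih by simp
    also have "\<dots> = 2*u*y 0 - cf kf (Suc n) * (y 0)^2"
      unfolding eq by (simp add: algebra_simps)
    also have "\<dots> \<le> u^2 / cf kf (Suc n)" using quad_le c by simp
    finally show ?thesis .
  qed
qed

lemma F_neg: "n \<ge> 1 \<Longrightarrow> \<forall>j<n. kf j \<ge> 2 \<Longrightarrow> j0 < n \<Longrightarrow> y j0 \<noteq> 0 \<Longrightarrow> F (nk kf) n 0 y < 0"
proof (induction n arbitrary: kf y j0)
  case 0 then show ?case by simp
next
  case (Suc n)
  show ?case
  proof (cases "n = 0")
    case True
    have k: "real_of_int (kf 0) > 0" using Suc.prems by auto
    have "y 0 \<noteq> 0" using Suc.prems True by simp
    then have "(y 0)^2 > 0" by simp
    then have "kf 0 * (y 0)^2 > 0" using k by simp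
    then show ?thesis using True by (simp add: F_one power2_eq_square algebra_simps)
  next
    case False
    then have n: "n \<ge> 1" by simp
    have ks: "\<forall>j<n. kf (Suc j) \<ge> 2" using Suc.prems by auto
    have c1: "cf (\<lambda>j. kf (Suc j)) n > 1" using cf_gt1[OF n ks] .
    have c: "cf kf (Suc n) > 1" using cf_gt1[of "Suc n" kf] Suc.prems by simp
    have eq: "cf kf (Suc n) = kf 0 - 1 / cf (\<lambda>j. kf (Suc j)) n" using cf_Suc[OF n] .
    have Fe: "F (nk kf) (Suc n) 0 y = - kf 0 * (y 0)^2
        + (F (nk (\<lambda>j. kf (Suc j))) n (y 0) (\<lambda>j. y (Suc j)) + y 0 * y 1)"
      using F_Suc[OF n, of "nk kf" 0 y] by (simp add: power2_eq_square algebra_simps)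
    show ?thesis
    proof (cases "y 0 = 0")
      case False
      have ih: "F (nk (\<lambda>j. kf (Suc j))) n (y 0) (\<lambda>j. y (Suc j)) + y 0 * y 1
         \<le> (y 0)^2 / cf (\<lambda>j. kf (Suc j)) n"
        using F_bound[OF n ks, of "y 0" "\<lambda>j. y (Suc j)"] by simp
      have "F (nk kf) (Suc n) 0 y \<le> - kf 0 * (y 0)^2 + (y 0)^2 / cf (\<lambda>j. kf (Suc j)) n"
        using Fe ih by simp
      also have "\<dots> = - cf kf (Suc n) * (y 0)^2" unfolding eq by (simp add: algebra_simps)
      also have "\<dots> < 0" using c False by simp
      finally show ?thesis .
    next
      case True
      then obtain j1 where j1: "j0 = Suc j1" using Suc.prems by (cases j0) auto
      have "F (nk (\<lambda>j. kf (Suc j))) n 0 (\<lambda>j. y (Suc j)) < 0"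
        using Suc.IH[OF n ks, of j1 "\<lambda>j. y (Suc j)"] Suc.prems j1 by simp
      then show ?thesis using Fe True by simp
    qed
  qed
qed

lemma F_wit: "n \<ge> 1 \<Longrightarrow> \<forall>j<n. kf j \<ge> 2 \<Longrightarrow> \<exists>y. F (nk kf) n u y + u * y 0 = u^2 / cf kf n"
proof (induction n arbitrary: kf u)
  case 0 then show ?case by simp
next
  case (Suc n)
  show ?case
  proof (cases "n = 0")
    case True
    have k: "real_of_int (kf 0) > 0" using Suc.prems by auto
    have "F (nk kf) (Suc n) u (\<lambda>_. u / kf 0) + u * (u / kf 0) = u^2 / cf kf (Suc n)"
      using True k by (simp add: F_one cf_one field_simps power2_eq_square)
    then show ?thesis by blast
  next
    case False
    then have n: "n \<ge> 1" by simp
    have ks: "\<forall>j<n. kf (Suc j) \<ge> 2" using Suc.prems by auto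
    have c1: "cf (\<lambda>j. kf (Suc j)) n > 1" using cf_gt1[OF n ks] .
    have c: "cf kf (Suc n) > 1" using cf_gt1[of "Suc n" kf] Suc.prems by simp
    have eq: "cf kf (Suc n) = kf 0 - 1 / cf (\<lambda>j. kf (Suc j)) n" using cf_Suc[OF n] .
    define v where "v = u / cf kf (Suc n)"
    obtain y' where y': "F (nk (\<lambda>j. kf (Suc j))) n v y' + v * y' 0 = v^2 / cf (\<lambda>j. kf (Suc j)) n"
      using Suc.IH[OF n ks] by blast
    define y where "y = (\<lambda>j. if j = 0 then v else y' (j - 1))"
    have y0: "y 0 = v" and ys: "(\<lambda>j. y (Suc j)) = y'" and y1: "y 1 = y' 0"
      by (auto simp: y_def)
    have "F (nk kf) (Suc n) u y + u * y 0 = 2*u*v - kf 0 * v^2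
        + (F (nk (\<lambda>j. kf (Suc j))) n v y' + v * y' 0)"
      using F_Suc[OF n, of "nk kf" u y] y0 ys y1 by (simp add: power2_eq_square algebra_simps)
    also have "\<dots> = 2*u*v - cf kf (Suc n) * v^2"
      unfolding y' eq by (simp add: algebra_simps)
    also have "\<dots> = u^2 / cf kf (Suc n)"
      using c unfolding v_def by (simp add: field_simps power2_eq_square)
    finally show ?thesis by blast
  qed
qed



definition armok :: "(nat \<Rightarrow> int) \<Rightarrow> nat \<Rightarrow> int \<Rightarrow> (nat \<Rightarrow> int) \<Rightarrow> bool" where
  "armok l m C w \<longleftrightarrow> (\<forall>j<m. (if j = 0 then C else w (j-1)) - l j * w j + (if j+1 < m then w (j+1) else 0) > 0)"

lemma armok_one: "armok l (Suc 0) C w \<longleftrightarrow> C - l 0 * w 0 > 0"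
  by (simp add: armok_def)

lemma armok_Suc: "m \<ge> 1 \<Longrightarrow> armok l (Suc m) C w \<longleftrightarrow>
   (C - l 0 * w 0 + w 1 > 0 \<and> armok (\<lambda>j. l (Suc j)) m (w 0) (\<lambda>j. w (Suc j)))"
proof -
  assume m: "m \<ge> 1"
  have e: "(if i = 0 then w 0 else w (Suc (i - 1))) = w i" for i by (cases i) auto
  show ?thesis unfolding armok_def All_less_Suc2 using m by (simp add: e)
qed

lemma arm_nec: "m \<ge> 1 \<Longrightarrow> \<forall>j<m. l j \<ge> 2 \<Longrightarrow> \<forall>j<m. w j > 0 \<Longrightarrow> armok l m C w
   \<Longrightarrow> of_int (w 0) * cf l m < of_int C"
proof (induction m arbitrary: l C w)
  case 0 then show ?case by simp
next
  case (Suc m)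
  show ?case
  proof (cases "m = 0")
    case True
    then have "l 0 * w 0 < C" using Suc.prems by (simp add: armok_one)
    then have "real_of_int (l 0 * w 0) < real_of_int C" by (simp only: of_int_less_iff)
    then show ?thesis using True by (simp add: cf_one algebra_simps)
  next
    case False
    then have m: "m \<ge> 1" by simp
    have ls: "\<forall>j<m. l (Suc j) \<ge> 2" and ws: "\<forall>j<m. w (Suc j) > 0" using Suc.prems by auto
    have a1: "C - l 0 * w 0 + w 1 > 0" and a2: "armok (\<lambda>j. l (Suc j)) m (w 0) (\<lambda>j. w (Suc j))"
      using Suc.prems(4) armok_Suc[OF m] by auto
    have ih: "of_int (w 1) * cf (\<lambda>j. l (Suc j)) m < of_int (w 0)"
      using Suc.IH[OF m ls ws a2] by simp
    have c1: "cf (\<lambda>j. l (Suc j)) m > 1" using cf_gt1[OF m ls] .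
    have eq: "cf l (Suc m) = l 0 - 1 / cf (\<lambda>j. l (Suc j)) m" using cf_Suc[OF m] .
    have "w 0 / cf (\<lambda>j. l (Suc j)) m > w 1" using ih c1 by (simp add: field_simps)
    then have "of_int (w 0) * cf l (Suc m) < l 0 * w 0 - w 1"
      unfolding eq by (simp add: algebra_simps)
    also have "\<dots> < C" using a1 by linarith
    finally show ?thesis .
  qed
qed

lemma find_rat: "(lo::real) \<ge> 0 \<Longrightarrow> lo < hi \<Longrightarrow> (p::int) > 0 \<Longrightarrow>
   \<exists>(N::int) (p'::int). N > 0 \<and> p' > 0 \<and> lo < p' / (p * N) \<and> p' / (p * N) < hi"
proof -
  assume h: "lo \<ge> 0" "lo < hi" "p > 0"
  obtain N :: nat where N: "N > 1 / (p * (hi - lo))" using reals_Archimedean2 by blast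
  have pos: "1 / (p * (hi - lo)) > 0" using h by simp
  then have Np: "N > 0" using N by linarith
  have D: "real_of_int p * N > 0" using h Np by simp
  define p' where "p' = floor (lo * (p * N)) + 1"
  have g1: "p' > lo * (p * N)" unfolding p'_def by linarith
  have g2: "p' \<le> lo * (p * N) + 1" unfolding p'_def by linarith
  have "lo * (p*N) \<ge> 0" using h D by simp
  then have pp: "p' > 0" unfolding p'_def by linarith
  have "1 < N * (p * (hi - lo))" using N h by (simp add: field_simps)
  then have g3: "lo * (p * N) + 1 < hi * (p * N)" by (simp add: algebra_simps)
  have r1: "lo < p' / (p * N)" using g1 D by (simp add: field_simps)
  have r2: "p' / (p * N) < hi" using g2 g3 D by (simp add: field_simps)
  show ?thesis using r1 r2 pp Np
    by (intro exI[of _ "int N"] exI[of _ p']) simp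
qed

lemma arm_suf: "m \<ge> 1 \<Longrightarrow> \<forall>j<m. l j \<ge> 2 \<Longrightarrow> p > 0 \<Longrightarrow> of_int p * cf l m < of_int C \<Longrightarrow>
   \<exists>t w. t > 0 \<and> w 0 = t * p \<and> (\<forall>j<m. w j > 0) \<and> armok l m (t * C) w"
proof (induction m arbitrary: l C p)
  case 0 then show ?case by simp
next
  case (Suc m)
  show ?case
  proof (cases "m = 0")
    case True
    have "real_of_int (p * l 0) < real_of_int C" using Suc.prems True by (simp add: cf_one)
    then have "p * l 0 < C" by (simp only: of_int_less_iff)
    then show ?thesis using Suc.prems True
      by (intro exI[of _ 1] exI[of _ "\<lambda>_. p"]) (simp add: armok_one algebra_simps)
  next
    case False
    then have m: "m \<ge> 1" by simp
    have ls: "\<forall>j<m. l (Suc j) \<ge> 2" using Suc.prems by auto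
    have c1: "cf (\<lambda>j. l (Suc j)) m > 1" using cf_gt1[OF m ls] .
    have eq: "cf l (Suc m) = l 0 - 1 / cf (\<lambda>j. l (Suc j)) m" using cf_Suc[OF m] .
    define lo where "lo = max 0 (l 0 - C / p)"
    define hi where "hi = 1 / cf (\<lambda>j. l (Suc j)) m"
    have pp: "real_of_int p > 0" using Suc.prems by simp
    have "l 0 - C / p < hi"
      using Suc.prems(4) pp unfolding eq hi_def by (simp add: field_simps)
    moreover have "0 < hi" using c1 unfolding hi_def by simp
    ultimately have lohi: "lo < hi" unfolding lo_def by simp
    obtain N p' :: int where NP: "N > 0" "p' > 0" "lo < p' / (p * N)" "p' / (p * N) < hi"
      using find_rat[OF _ lohi Suc.prems(3)] unfolding lo_def by auto
    have D: "real_of_int p * N > 0" using NP pp by simp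
    have "of_int p' * cf (\<lambda>j. l (Suc j)) m < of_int (p * N)"
      using NP(4) D c1 unfolding hi_def by (simp add: field_simps)
    then obtain t' w' where tw: "t' > 0" "w' 0 = t' * p'" "\<forall>j<m. w' j > 0"
      "armok (\<lambda>j. l (Suc j)) m (t' * (p * N)) w'"
      using Suc.IH[OF m ls NP(2)] by blast
    have "l 0 - C / p < p' / (p * N)" using NP(3) unfolding lo_def by simp
    then have mm: "(l 0 - C / p) * (p * N) < p' / (p * N) * (p * N)"
      using D by (intro mult_strict_right_mono) simp_all
    have e1: "(l 0 - C / p) * (p * N) = real_of_int (l 0) * p * N - real_of_int C * N"
      using pp by (simp add: field_simps)
    have e2: "p' / (p * N) * (p * N) = real_of_int p'" using NP(1) Suc.prems(3) by simp
    have r: "real_of_int (l 0) * p * N - real_of_int C * N < real_of_int p'"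
      using mm unfolding e1 e2 .
    have "real_of_int (l 0 * p * N - C * N) < real_of_int p'" using r by simp
    then have "l 0 * p * N - C * N < p'" by (simp only: of_int_less_iff)
    then have key: "N * C - l 0 * (N * p) + p' > 0" by (simp add: algebra_simps)
    define w where "w = (\<lambda>j. if j = 0 then t' * N * p else w' (j - 1))"
    have w0: "w 0 = t' * N * p" and ws: "(\<lambda>j. w (Suc j)) = w'" and w1: "w 1 = w' 0"
      by (auto simp: w_def)
    have A1: "t' * N * C - l 0 * w 0 + w 1 > 0"
    proof -
      have "t' * N * C - l 0 * w 0 + w 1 = t' * (N * C - l 0 * (N * p) + p')"
        using w0 w1 tw(2) by (simp add: algebra_simps)
      also have "\<dots> > 0" using tw(1) key by simp
      finally show ?thesis .
    qed
    have A2: "armok (\<lambda>j. l (Suc j)) m (w 0) (\<lambda>j. w (Suc j))"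
      using tw(4) w0 ws by (simp add: algebra_simps)
    have "armok l (Suc m) (t' * N * C) w" using armok_Suc[OF m] A1 A2 by simp
    moreover have "\<forall>j<Suc m. w j > 0"
      using tw NP Suc.prems(3) by (auto simp: w_def less_Suc_eq_0_disj)
    moreover have "t' * N > 0" using tw NP by simp
    ultimately show ?thesis using w0 by (intro exI[of _ "t' * N"] exI[of _ w]) simp
  qed
qed



lemma star_comps_eq: "star_comps s len = insert None (Some ` (SIGMA i:{..<s}. {..<len i}))"
  by (auto simp: star_comps_def)

lemma sum_star: "(\<Sum>u\<in>star_comps s len. g u) = g None + (\<Sum>i<s. \<Sum>j<len i. g (Some (i,j)))"
proof -
  have "(\<Sum>u\<in>star_comps s len. g u) = g None + (\<Sum>u\<in>Some ` (SIGMA i:{..<s}. {..<len i}). g u)"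
    unfolding star_comps_eq by (subst sum.insert) auto
  also have "(\<Sum>u\<in>Some ` (SIGMA i:{..<s}. {..<len i}). g u) = (\<Sum>ij\<in>(SIGMA i:{..<s}. {..<len i}). g (Some ij))"
    by (subst sum.reindex) auto
  also have "\<dots> = (\<Sum>(i,j)\<in>(SIGMA i:{..<s}. {..<len i}). g (Some (i,j)))"
    by (simp add: split_def)
  also have "\<dots> = (\<Sum>i<s. \<Sum>j<len i. g (Some (i,j)))"
    by (rule sum.Sigma[symmetric]) auto
  finally show ?thesis .
qed

lemma star_form_sym: "star_form c a u v = star_form c a v u"
  by (cases u; cases v) auto

lemma inner_row:
  fixes w :: "nat \<Rightarrow> 'b::comm_ring_1"
  assumes "j < L"
  shows "(\<Sum>j'<L. w j' * of_int (if j' = j then A else if j' = j+1 \<or> j = j'+1 then 1 else 0))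
     = w j * of_int A + (if j+1 < L then w (j+1) else 0) + (if j \<ge> 1 then w (j-1) else 0)"
proof -
  have "(\<Sum>j'<L. w j' * of_int (if j' = j then A else if j' = j+1 \<or> j = j'+1 then 1 else 0))
     = (\<Sum>j'<L. (if j' = j then w j * of_int A else 0) + (if j' = j+1 then w j' else 0)
            + (if j' + 1 = j then w j' else 0))"
    by (rule sum.cong) auto
  also have "\<dots> = (\<Sum>j'<L. (if j' = j then w j * of_int A else 0)) + (\<Sum>j'<L. (if j' = j+1 then w j' else 0))
            + (\<Sum>j'<L. (if j' + 1 = j then w j' else 0))"
    by (simp add: sum.distrib)
  also have "(\<Sum>j'<L. (if j' + 1 = j then w j' else 0)) = (if j \<ge> 1 then w (j-1) else 0)"
  proof (cases j)
    case 0 then show ?thesis by simp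
  next
    case (Suc j0)
    then have "(\<Sum>j'<L. (if j' + 1 = j then w j' else 0)) = (\<Sum>j'<L. (if j' = j0 then w j' else 0))"
      by (intro sum.cong) auto
    also have "\<dots> = w j0" using assms Suc by (simp add: sum.delta)
    finally show ?thesis using Suc by simp
  qed
  finally show ?thesis using assms by (simp add: sum.delta)
qed

lemma mult_delta: "(w::'b::comm_ring_1) * of_int (if P then 1 else 0) = (if P then w else 0)" by simp

lemma row_None:
  fixes w :: "(nat \<times> nat) option \<Rightarrow> 'b::comm_ring_1"
  assumes "\<forall>i<s. len i \<ge> 1"
  shows "(\<Sum>u\<in>star_comps s len. w u * of_int (star_form c a u None))
     = w None * of_int c + (\<Sum>i<s. w (Some (i,0)))"
proof -
  have "(\<Sum>i<s. \<Sum>j<len i. w (Some (i,j)) * of_int (star_form c a (Some (i,j)) None))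
      = (\<Sum>i<s. w (Some (i,0)))"
  proof (rule sum.cong)
    fix i assume "i \<in> {..<s}"
    then have "0 < len i" using assms by auto
    then show "(\<Sum>j<len i. w (Some (i,j)) * of_int (star_form c a (Some (i,j)) None)) = w (Some (i,0))"
      by (simp add: mult_delta sum.delta)
  qed simp
  then show ?thesis by (simp add: sum_star)
qed

lemma row_Some:
  fixes w :: "(nat \<times> nat) option \<Rightarrow> 'b::comm_ring_1"
  assumes "i < s" "j < len i"
  shows "(\<Sum>u\<in>star_comps s len. w u * of_int (star_form c a u (Some (i,j))))
     = (if j = 0 then w None else w (Some (i,j-1))) + w (Some (i,j)) * of_int (a i j)
       + (if j+1 < len i then w (Some (i,j+1)) else 0)"
proof -
  have "(\<Sum>i'<s. \<Sum>j'<len i'. w (Some (i',j')) * of_int (star_form c a (Some (i',j')) (Some (i,j))))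
      = (\<Sum>i'<s. if i' = i then (\<Sum>j'<len i. w (Some (i,j')) * of_int (if j' = j then a i j
          else if j' = j+1 \<or> j = j'+1 then 1 else 0)) else 0)"
  proof (rule sum.cong)
    fix i' assume "i' \<in> {..<s}"
    show "(\<Sum>j'<len i'. w (Some (i',j')) * of_int (star_form c a (Some (i',j')) (Some (i,j))))
      = (if i' = i then (\<Sum>j'<len i. w (Some (i,j')) * of_int (if j' = j then a i j
          else if j' = j+1 \<or> j = j'+1 then 1 else 0)) else 0)"
      by (cases "i' = i") (auto intro: sum.cong)
  qed simp
  also have "\<dots> = (\<Sum>j'<len i. w (Some (i,j')) * of_int (if j' = j then a i j
          else if j' = j+1 \<or> j = j'+1 then 1 else 0))"
    using assms by (simp add: sum.delta)
  also have "\<dots> = w (Some (i,j)) * of_int (a i j) + (if j+1 < len i then w (Some (i,j+1)) else 0)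
       + (if j \<ge> 1 then w (Some (i,j-1)) else 0)"
    using inner_row[OF assms(2), of "\<lambda>j'. w (Some (i,j'))"] by simp
  finally have X: "(\<Sum>i'<s. \<Sum>j'<len i'. w (Some (i',j')) * of_int (star_form c a (Some (i',j')) (Some (i,j))))
     = w (Some (i,j)) * of_int (a i j) + (if j+1 < len i then w (Some (i,j+1)) else 0)
       + (if j \<ge> 1 then w (Some (i,j-1)) else 0)" .
  show ?thesis unfolding sum_star X by (cases j) (simp_all add: algebra_simps)
qed

lemma quad_star:
  assumes "\<forall>i<s. len i \<ge> 1"
  shows "(\<Sum>u\<in>star_comps s len. \<Sum>v\<in>star_comps s len. x u * of_int (star_form c a u v) * x v)
    = of_int c * (x None)^2 + x None * (\<Sum>i<s. x (Some (i,0)))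
      + (\<Sum>i<s. F (\<lambda>j. of_int (a i j)) (len i) (x None) (\<lambda>j. x (Some (i,j))))"
proof -
  define R where "R u = (\<Sum>v\<in>star_comps s len. x v * of_int (star_form c a v u))" for u
  have "(\<Sum>u\<in>star_comps s len. \<Sum>v\<in>star_comps s len. x u * of_int (star_form c a u v) * x v)
     = (\<Sum>u\<in>star_comps s len. x u * R u)"
    unfolding R_def by (simp add: sum_distrib_left star_form_sym[of c a _ ] algebra_simps)
  also have "\<dots> = x None * R None + (\<Sum>i<s. \<Sum>j<len i. x (Some (i,j)) * R (Some (i,j)))"
    by (rule sum_star)
  also have "\<dots> = x None * (x None * of_int c + (\<Sum>i<s. x (Some (i,0))))
     + (\<Sum>i<s. \<Sum>j<len i. x (Some (i,j)) * ((if j = 0 then x None else x (Some (i,j-1)))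
        + x (Some (i,j)) * of_int (a i j) + (if j+1 < len i then x (Some (i,j+1)) else 0)))"
  proof -
    have RN: "R None = x None * of_int c + (\<Sum>i<s. x (Some (i,0)))"
      unfolding R_def by (rule row_None[OF assms])
    have RS: "R (Some (i,j)) = (if j = 0 then x None else x (Some (i,j-1)))
        + x (Some (i,j)) * of_int (a i j) + (if j+1 < len i then x (Some (i,j+1)) else 0)"
      if "i < s" "j < len i" for i j
      unfolding R_def by (rule row_Some[where len=len, OF that])
    show ?thesis unfolding RN by (simp add: RS)
  qed
  also have "\<dots> = of_int c * (x None)^2 + x None * (\<Sum>i<s. x (Some (i,0)))
      + (\<Sum>i<s. F (\<lambda>j. of_int (a i j)) (len i) (x None) (\<lambda>j. x (Some (i,j))))"
    unfolding F_def by (simp add: algebra_simps power2_eq_square)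
  finally show ?thesis .
qed



lemma step_CD:
  fixes k :: int and s :: nat and n m :: "nat \<Rightarrow> nat" and kk ll :: "nat \<Rightarrow> nat \<Rightarrow> int"
  assumes hn: "\<forall>i<s. n i \<ge> 1"
    and hm: "\<forall>i<s. m i \<ge> 1"
    and hkk: "\<forall>i<s. \<forall>j<n i. kk i j \<ge> 2"
    and hll: "\<forall>i<s. \<forall>j<m i. ll i j \<ge> 2"
    and hchain: "\<forall>i<s. fibre_chain
        (map (\<lambda>j. - kk i j) [0..<n i] @ [-1] @ rev (map (\<lambda>j. - ll i j) [0..<m i]))"
  shows "(\<Sum>i<s. 1 / cfrac (map (ll i) [0..<m i])) = real s - (\<Sum>i<s. 1 / cfrac (map (kk i) [0..<n i]))"
proof -
  have e: "1 / cfrac (map (ll i) [0..<m i]) = 1 - 1 / cfrac (map (kk i) [0..<n i])" if i: "i < s" for i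
  proof -
    have "1 / cfrac (map (kk i) [0..<n i]) + 1 / cfrac (map (ll i) [0..<m i]) = 1"
    proof (rule chain_cf)
      show "map (kk i) [0..<n i] \<noteq> []" using hn i by auto
      show "map (ll i) [0..<m i] \<noteq> []" using hm i by auto
      show "\<forall>c\<in>set (map (kk i) [0..<n i]). 2 \<le> c" using hkk i by auto
      show "\<forall>c\<in>set (map (ll i) [0..<m i]). 2 \<le> c" using hll i by auto
      show "fibre_chain (map uminus (map (kk i) [0..<n i]) @ [- 1] @ rev (map uminus (map (ll i) [0..<m i])))"
        using hchain i by (simp add: comp_def)
    qed
    then show ?thesis by simp
  qed
  have "(\<Sum>i<s. 1 / cfrac (map (ll i) [0..<m i])) = (\<Sum>i<s. 1 - 1 / cfrac (map (kk i) [0..<n i]))"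
    by (rule sum.cong) (auto simp: e)
  also have "\<dots> = real s - (\<Sum>i<s. 1 / cfrac (map (kk i) [0..<n i]))"
    by (simp add: sum_subtractf)
  finally show ?thesis .
qed

lemma step_BC:
  fixes k :: int and s :: nat and n :: "nat \<Rightarrow> nat" and kk :: "nat \<Rightarrow> nat \<Rightarrow> int"
  assumes hn: "\<forall>i<s. n i \<ge> 1"
    and hkk: "\<forall>i<s. \<forall>j<n i. kk i j \<ge> 2"
  shows "neg_definite (star_form (- k) (\<lambda>i j. - kk i j)) (star_comps s n)
        \<longleftrightarrow> (\<Sum>i<s. 1 / cfrac (map (kk i) [0..<n i])) < real_of_int k"
proof -
  let ?S = "star_comps s n"
  let ?Q = "star_form (- k) (\<lambda>i j. - kk i j)"
  define ck where "ck i = cf (kk i) (n i)" for i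
  have ckc: "(\<Sum>i<s. 1 / cfrac (map (kk i) [0..<n i])) = (\<Sum>i<s. 1 / ck i)"
    by (simp add: ck_def cf_def)
  have QF: "(\<Sum>u\<in>?S. \<Sum>v\<in>?S. x u * of_int (?Q u v) * x v)
      = - k * (x None)^2 + (\<Sum>i<s. F (nk (kk i)) (n i) (x None) (\<lambda>j. x (Some (i,j))) + x None * x (Some (i,0)))"
    for x :: "(nat \<times> nat) option \<Rightarrow> real"
    unfolding quad_star[OF hn] by (simp add: sum.distrib sum_distrib_left)
  have bnd: "F (nk (kk i)) (n i) u y + u * y 0 \<le> u^2 / ck i" if "i < s" for i u y
    unfolding ck_def using F_bound[of "n i" "kk i" u y] hn hkk that by auto
  show ?thesis unfolding ckc
  proof
    assume nd: "neg_definite ?Q ?S"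
    have "\<forall>i<s. \<exists>y. F (nk (kk i)) (n i) 1 y + 1 * y 0 = 1^2 / ck i"
      unfolding ck_def using F_wit hn hkk by blast
    then obtain Y where Y: "\<And>i. i < s \<Longrightarrow> F (nk (kk i)) (n i) 1 (Y i) + Y i 0 = 1 / ck i"
      by (metis mult_1 power_one)
    define x where "x u = (case u of None \<Rightarrow> 1 | Some (i,j) \<Rightarrow> Y i j)" for u
    have "None \<in> ?S" by (simp add: star_comps_def)
    moreover have "x None \<noteq> 0" by (simp add: x_def)
    ultimately have "(\<Sum>u\<in>?S. \<Sum>v\<in>?S. x u * of_int (?Q u v) * x v) < 0"
      using nd unfolding neg_definite_def by blast
    also have "(\<Sum>u\<in>?S. \<Sum>v\<in>?S. x u * of_int (?Q u v) * x v) = - k + (\<Sum>i<s. 1 / ck i)"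
    proof -
      have "(\<Sum>i<s. F (nk (kk i)) (n i) (x None) (\<lambda>j. x (Some (i,j))) + x None * x (Some (i,0)))
          = (\<Sum>i<s. 1 / ck i)"
      proof (rule sum.cong)
        fix i assume "i \<in> {..<s}"
        then show "F (nk (kk i)) (n i) (x None) (\<lambda>j. x (Some (i,j))) + x None * x (Some (i,0)) = 1 / ck i"
          using Y[of i] by (simp add: x_def)
      qed simp
      then show ?thesis unfolding QF by (simp add: x_def)
    qed
    finally show "(\<Sum>i<s. 1 / ck i) < real_of_int k" by simp
  next
    assume lt: "(\<Sum>i<s. 1 / ck i) < real_of_int k"
    show "neg_definite ?Q ?S" unfolding neg_definite_def
    proof (intro allI impI)
      fix x :: "(nat \<times> nat) option \<Rightarrow> real"
      assume ex: "\<exists>u\<in>?S. x u \<noteq> 0"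
      have sb: "(\<Sum>i<s. F (nk (kk i)) (n i) (x None) (\<lambda>j. x (Some (i,j))) + x None * x (Some (i,0)))
          \<le> (\<Sum>i<s. (x None)^2 / ck i)"
        by (rule sum_mono) (use bnd in auto)
      show "(\<Sum>u\<in>?S. \<Sum>v\<in>?S. x u * of_int (?Q u v) * x v) < 0"
      proof (cases "x None = 0")
        case False
        have "(\<Sum>u\<in>?S. \<Sum>v\<in>?S. x u * of_int (?Q u v) * x v) \<le> - k * (x None)^2 + (\<Sum>i<s. (x None)^2 / ck i)"
          unfolding QF using sb by simp
        also have "\<dots> = (x None)^2 * ((\<Sum>i<s. 1 / ck i) - k)"
          by (simp add: sum_distrib_left algebra_simps)
        also have "\<dots> < 0" using False lt by (simp add: mult_pos_neg)
        finally show ?thesis .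
      next
        case True
        then obtain i j where ij: "i < s" "j < n i" "x (Some (i,j)) \<noteq> 0"
          using ex by (auto simp: star_comps_def)
        have le: "F (nk (kk i')) (n i') 0 (\<lambda>j. x (Some (i',j))) \<le> 0" if "i' < s" for i'
          using bnd[OF that, of 0 "\<lambda>j. x (Some (i',j))"] by simp
        have lt0: "F (nk (kk i)) (n i) 0 (\<lambda>j. x (Some (i,j))) < 0"
          using F_neg[of "n i" "kk i" j "\<lambda>j. x (Some (i,j))"] hn hkk ij by auto
        have "(\<Sum>i<s. F (nk (kk i)) (n i) 0 (\<lambda>j. x (Some (i,j))))
            = F (nk (kk i)) (n i) 0 (\<lambda>j. x (Some (i,j))) + (\<Sum>i'\<in>{..<s} - {i}. F (nk (kk i')) (n i') 0 (\<lambda>j. x (Some (i',j))))"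
          using ij by (subst sum.remove[of _ i]) auto
        also have "\<dots> < 0"
        proof -
          have "(\<Sum>i'\<in>{..<s} - {i}. F (nk (kk i')) (n i') 0 (\<lambda>j. x (Some (i',j)))) \<le> 0"
            by (rule sum_nonpos) (use le in auto)
          then show ?thesis using lt0 by linarith
        qed
        finally show ?thesis unfolding QF using True by simp
      qed
    qed
  qed
qed



lemma step_AD:
  fixes k :: int and s :: nat and m :: "nat \<Rightarrow> nat" and ll :: "nat \<Rightarrow> nat \<Rightarrow> int"
  assumes hm: "\<forall>i<s. m i \<ge> 1"
    and hll: "\<forall>i<s. \<forall>j<m i. ll i j \<ge> 2"
  shows "pos_normal_support (star_form (k - int s) (\<lambda>i j. - ll i j)) (star_comps s m)
        \<longleftrightarrow> (\<Sum>i<s. 1 / cfrac (map (ll i) [0..<m i])) > real s - real_of_int k"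
proof -
  let ?S = "star_comps s m"
  let ?Q = "star_form (k - int s) (\<lambda>i j. - ll i j)"
  define cl where "cl i = cf (ll i) (m i)" for i
  have clc: "(\<Sum>i<s. 1 / cfrac (map (ll i) [0..<m i])) = (\<Sum>i<s. 1 / cl i)"
    by (simp add: cl_def cf_def)
  have clgt: "cl i > 1" if "i < s" for i
    unfolding cl_def using cf_gt1[of "m i" "ll i"] hm hll that by auto
  have RN: "(\<Sum>u\<in>?S. a u * ?Q u None) = a None * (k - int s) + (\<Sum>i<s. a (Some (i,0)))" for a
    using row_None[OF hm, of a "k - int s" "\<lambda>i j. - ll i j"] by simp
  have RS: "(\<Sum>u\<in>?S. a u * ?Q u (Some (i,j))) = (if j = 0 then a None else a (Some (i,j-1)))
       - ll i j * a (Some (i,j)) + (if j+1 < m i then a (Some (i,j+1)) else 0)"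
    if "i < s" "j < m i" for a i j
    using row_Some[where len=m, OF that, of a "k - int s" "\<lambda>i j. - ll i j"] by (simp add: algebra_simps)
  have memS: "Some (i,j) \<in> ?S \<longleftrightarrow> i < s \<and> j < m i" for i j by (simp add: star_comps_def)
  have NS: "None \<in> ?S" by (simp add: star_comps_def)
  show ?thesis unfolding clc
  proof
    assume "pos_normal_support ?Q ?S"
    then obtain a where apos: "\<forall>u\<in>?S. a u > 0" and arow: "\<forall>v\<in>?S. (\<Sum>u\<in>?S. a u * ?Q u v) > 0"
      unfolding pos_normal_support_def by blast
    define C where "C = a None"
    have Cp: "C > 0" using apos NS by (simp add: C_def)
    have "(\<Sum>u\<in>?S. a u * ?Q u None) > 0" using arow NS by blast
    then have cen: "C * (k - int s) + (\<Sum>i<s. a (Some (i,0))) > 0"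
      unfolding RN C_def .
    have arm: "of_int (a (Some (i,0))) * cl i < of_int C" if i: "i < s" for i
    proof -
      have ok: "armok (ll i) (m i) C (\<lambda>j. a (Some (i,j)))"
        unfolding armok_def
      proof (intro allI impI)
        fix j assume j: "j < m i"
        have "(\<Sum>u\<in>?S. a u * ?Q u (Some (i,j))) > 0" using arow memS i j by blast
        then show "(if j = 0 then C else a (Some (i, j - 1))) - ll i j * a (Some (i, j))
            + (if j + 1 < m i then a (Some (i, j + 1)) else 0) > 0"
          unfolding RS[OF i j] C_def .
      qed
      show ?thesis
        using arm_nec[of "m i" "ll i" "\<lambda>j. a (Some (i,j))" C] hm hll apos memS i ok
        unfolding cl_def by auto
    qed
    have "real_of_int (C * (k - int s) + (\<Sum>i<s. a (Some (i,0)))) > 0" using cen by linarith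
    then have "0 < C * (k - real s) + (\<Sum>i<s. real_of_int (a (Some (i,0))))" by simp
    also have "(\<Sum>i<s. real_of_int (a (Some (i,0)))) \<le> (\<Sum>i<s. C / cl i)"
    proof (rule sum_mono)
      fix i assume "i \<in> {..<s}"
      then have "i < s" by simp
      then show "real_of_int (a (Some (i,0))) \<le> C / cl i"
        using arm[of i] clgt[of i] by (simp add: field_simps)
    qed
    finally have "0 < C * (k - real s) + (\<Sum>i<s. C / cl i)" by simp
    also have "\<dots> = C * ((k - real s) + (\<Sum>i<s. 1 / cl i))"
      by (simp add: sum_distrib_left algebra_simps)
    finally have "0 < (k - real s) + (\<Sum>i<s. 1 / cl i)" using Cp
      by (simp add: zero_less_mult_iff)
    then show "(\<Sum>i<s. 1 / cl i) > real s - real_of_int k" by simp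
  next
    assume gt: "(\<Sum>i<s. 1 / cl i) > real s - real_of_int k"
    define \<sigma> where "\<sigma> = (\<Sum>i<s. 1 / cl i) - (real s - k)"
    have sp: "\<sigma> > 0" using gt by (simp add: \<sigma>_def)
    define C :: int where "C = ceiling (s / \<sigma> + (\<Sum>i<s. cl i)) + 1"
    have sumcl: "(\<Sum>i<s. cl i) \<ge> 0" using clgt by (intro sum_nonneg) (auto intro: less_imp_le order.strict_trans[OF zero_less_one])
    have Cgt: "real_of_int C > s / \<sigma> + (\<Sum>i<s. cl i)"
      unfolding C_def using le_of_int_ceiling[of "s / \<sigma> + (\<Sum>i<s. cl i)"] by linarith
    have sdiv: "s / \<sigma> \<ge> 0" using sp by simp
    have Cpos: "C > 0" using Cgt sumcl sdiv by linarith
    have Ccl: "real_of_int C > cl i" if "i < s" for i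
    proof -
      have "cl i \<le> (\<Sum>i<s. cl i)"
        using that clgt by (intro member_le_sum) (auto intro: less_imp_le order.strict_trans[OF zero_less_one])
      then show ?thesis using Cgt sdiv by linarith
    qed
    define p where "p i = ceiling (C / cl i) - 1" for i
    have pprop: "p i > 0 \<and> of_int (p i) * cl i < of_int C \<and> of_int (p i) \<ge> C / cl i - 1" if i: "i < s" for i
    proof -
      have c: "cl i > 0" using clgt[OF i] by simp
      have g1: "C / cl i > 1" using Ccl[OF i] c by (simp add: field_simps)
      have cc: "of_int (ceiling (C / cl i)) - 1 < C / cl i" "C / cl i \<le> of_int (ceiling (C / cl i))"
        using ceiling_correct[of "C / cl i"] by auto
      have "p i > 0"
      proof -
        have "of_int (ceiling (C / cl i)) > (1::real)" using cc g1 by linarith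
        then have "ceiling (C / cl i) > 1" by linarith
        then show ?thesis unfolding p_def by simp
      qed
      moreover have "of_int (p i) < C / cl i" using cc unfolding p_def by simp
      then have "of_int (p i) * cl i < of_int C" using c by (simp add: field_simps)
      moreover have "of_int (p i) \<ge> C / cl i - 1" using cc unfolding p_def by simp
      ultimately show ?thesis by blast
    qed
    have "\<forall>i<s. \<exists>t w. t > 0 \<and> w 0 = t * p i \<and> (\<forall>j<m i. w j > 0) \<and> armok (ll i) (m i) (t * C) w"
    proof (intro allI impI)
      fix i assume i: "i < s"
      show "\<exists>t w. t > 0 \<and> w 0 = t * p i \<and> (\<forall>j<m i. w j > 0) \<and> armok (ll i) (m i) (t * C) w"
        using arm_suf[of "m i" "ll i" "p i" C] hm hll pprop[OF i] i unfolding cl_def by auto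
    qed
    then obtain t W where tW: "\<And>i. i < s \<Longrightarrow> t i > 0 \<and> W i 0 = t i * p i \<and> (\<forall>j<m i. W i j > 0)
        \<and> armok (ll i) (m i) (t i * C) (W i)"
      by metis
    define TT where "TT = (\<Prod>i<s. t i)"
    define e where "e i = (\<Prod>i'\<in>{..<s} - {i}. t i')" for i
    have TTp: "TT > 0" unfolding TT_def using tW by (intro prod_pos) auto
    have ep: "e i > 0" for i unfolding e_def using tW by (intro prod_pos) auto
    have et: "e i * t i = TT" if "i < s" for i
      unfolding e_def TT_def using that by (subst prod.remove[of _ i]) (auto simp: algebra_simps)
    define a where "a u = (case u of None \<Rightarrow> TT * C | Some (i,j) \<Rightarrow> e i * W i j)" for u
    show "pos_normal_support ?Q ?S" unfolding pos_normal_support_def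
    proof (intro exI[of _ a] conjI ballI)
      fix u assume "u \<in> ?S"
      then show "a u > 0" using TTp Cpos ep tW by (auto simp: star_comps_def a_def)
    next
      fix v assume v: "v \<in> ?S"
      show "(\<Sum>u\<in>?S. a u * ?Q u v) > 0"
      proof (cases v)
        case None
        have "(\<Sum>i<s. a (Some (i,0))) = (\<Sum>i<s. TT * p i)"
        proof (rule sum.cong)
          fix i assume "i \<in> {..<s}"
          then have i: "i < s" by simp
          have "a (Some (i,0)) = e i * (t i * p i)" using tW[OF i] by (simp add: a_def)
          also have "\<dots> = TT * p i" using et[OF i] by (simp add: algebra_simps)
          finally show "a (Some (i,0)) = TT * p i" .
        qed simp
        then have eq: "(\<Sum>u\<in>?S. a u * ?Q u v) = TT * (C * (k - int s) + (\<Sum>i<s. p i))"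
          unfolding None RN by (simp add: a_def sum_distrib_left algebra_simps)
        have "(\<Sum>i<s. real_of_int (p i)) \<ge> (\<Sum>i<s. C / cl i - 1)"
          by (rule sum_mono) (use pprop in auto)
        also have "(\<Sum>i<s. C / cl i - 1) = C * (\<Sum>i<s. 1 / cl i) - s"
          by (simp add: sum_subtractf sum_distrib_left)
        finally have "(\<Sum>i<s. real_of_int (p i)) \<ge> C * (\<sigma> + (s - k)) - s"
          unfolding \<sigma>_def by simp
        moreover have "C * \<sigma> > s"
        proof -
          have "real_of_int C > s / \<sigma>" using Cgt sumcl by linarith
          then show ?thesis using sp by (simp add: field_simps)
        qed
        ultimately have "real_of_int C * (k - real s) + (\<Sum>i<s. real_of_int (p i)) > 0"
          by (simp add: algebra_simps)
        then have "real_of_int (C * (k - int s) + (\<Sum>i<s. p i)) > 0" by simp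
        then have "C * (k - int s) + (\<Sum>i<s. p i) > 0" by linarith
        then show ?thesis unfolding eq using TTp by simp
      next
        case (Some ij)
        then obtain i j where ij: "v = Some (i,j)" by (cases ij) auto
        then have i: "i < s" and j: "j < m i" using v memS by auto
        have ok: "(if j = 0 then t i * C else W i (j-1)) - ll i j * W i j
            + (if j+1 < m i then W i (j+1) else 0) > 0"
          using tW[OF i] j unfolding armok_def by blast
        have "(\<Sum>u\<in>?S. a u * ?Q u v) = e i * ((if j = 0 then t i * C else W i (j-1)) - ll i j * W i j
            + (if j+1 < m i then W i (j+1) else 0))"
          unfolding ij RS[OF i j] using et[OF i]
          by (simp add: a_def algebra_simps)
        also have "\<dots> > 0" using ep ok by simp
        finally show ?thesis .
      qed
    qed
  qed
qed


theorem lemma6: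
  fixes k :: int and s :: nat
    and n m :: "nat \<Rightarrow> nat"
    and kk ll :: "nat \<Rightarrow> nat \<Rightarrow> int"
  assumes hk: "k \<ge> 1"
    and hn: "\<forall>i<s. n i \<ge> 1"
    and hm: "\<forall>i<s. m i \<ge> 1"
    and hkk: "\<forall>i<s. \<forall>j<n i. kk i j \<ge> 2"
    and hll: "\<forall>i<s. \<forall>j<m i. ll i j \<ge> 2"
    and hchain: "\<forall>i<s. fibre_chain
        (map (\<lambda>j. - kk i j) [0..<n i] @ [-1] @ rev (map (\<lambda>j. - ll i j) [0..<m i]))"
  shows
    "(pos_normal_support (star_form (k - int s) (\<lambda>i j. - ll i j)) (star_comps s m)
        \<longleftrightarrow> neg_definite (star_form (- k) (\<lambda>i j. - kk i j)) (star_comps s n))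
   \<and> (neg_definite (star_form (- k) (\<lambda>i j. - kk i j)) (star_comps s n)
        \<longleftrightarrow> (\<Sum>i<s. 1 / cfrac (map (kk i) [0..<n i])) < real_of_int k)
   \<and> ((\<Sum>i<s. 1 / cfrac (map (kk i) [0..<n i])) < real_of_int k
        \<longleftrightarrow> (\<Sum>i<s. 1 / cfrac (map (ll i) [0..<m i])) > real s - real_of_int k)"
proof -
  have CD: "(\<Sum>i<s. 1 / cfrac (map (ll i) [0..<m i])) = real s - (\<Sum>i<s. 1 / cfrac (map (kk i) [0..<n i]))"
    by (rule step_CD[OF hn hm hkk hll hchain])
  have BC: "neg_definite (star_form (- k) (\<lambda>i j. - kk i j)) (star_comps s n)
        \<longleftrightarrow> (\<Sum>i<s. 1 / cfrac (map (kk i) [0..<n i])) < real_of_int k"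
    by (rule step_BC[OF hn hkk])
  have AD: "pos_normal_support (star_form (k - int s) (\<lambda>i j. - ll i j)) (star_comps s m)
        \<longleftrightarrow> (\<Sum>i<s. 1 / cfrac (map (ll i) [0..<m i])) > real s - real_of_int k"
    by (rule step_AD[OF hm hll])
  have CD': "((\<Sum>i<s. 1 / cfrac (map (kk i) [0..<n i])) < real_of_int k
        \<longleftrightarrow> (\<Sum>i<s. 1 / cfrac (map (ll i) [0..<m i])) > real s - real_of_int k)"
    unfolding CD by linarith
  show ?thesis using AD BC CD' by blast
qed

end
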